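(* For every $v\geq 9$ there exists a connected symmetric configuration $v_3$ which has a blocking set of cardinality $q$ for every integer $q$ with $\lceil v/3\rceil\leq q\leq\lfloor 2v/3\rfloor$.
   Context: A symmetric configuration $v_3$ consists of a set of $v$ points and a collection of $v$ blocks, each block being a 3-element subset of the points, such that every point lies in exactly 3 blocks and any two distinct points lie in at most one common block. It is connected if it is not the union of two configurations on disjoint nonempty point sets (equivalently, its point–block incidence graph is connected). A blocking set is a subset $Q$ of the points such that every block contains at least one point of $Q$ and at least one point not in $Q$. *)

theory Defs
  imports Main
begin

text \<open>Blocks are 3-element subsets of P; since two distinct points lie in at most one
  common block, blocks cannot repeat, so B is a set of blocks.\<close>
definition sym_config3 :: "'a set \<Rightarrow> 'a set set \<Rightarrow> bool" where
  "sym_config3 P B \<longleftrightarrow>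
     finite P \<and> card B = card P \<and>
     (\<forall>b\<in>B. b \<subseteq> P \<and> card b = 3) \<and>
     (\<forall>p\<in>P. card {b\<in>B. p \<in> b} = 3) \<and>
     (\<forall>p\<in>P. \<forall>p'\<in>P. p \<noteq> p' \<longrightarrow> card {b\<in>B. p \<in> b \<and> p' \<in> b} \<le> 1)"

definition config_connected :: "'a set \<Rightarrow> 'a set set \<Rightarrow> bool" where
  "config_connected P B \<longleftrightarrow>
     \<not> (\<exists>P1 P2. P1 \<noteq> {} \<and> P2 \<noteq> {} \<and> P1 \<inter> P2 = {} \<and> P1 \<union> P2 = P \<and>
                (\<forall>b\<in>B. b \<subseteq> P1 \<or> b \<subseteq> P2))"

definition blocking_set :: "'a set \<Rightarrow> 'a set set \<Rightarrow> 'a set \<Rightarrow> bool" where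
  "blocking_set P B Q \<longleftrightarrow> Q \<subseteq> P \<and> (\<forall>b\<in>B. b \<inter> Q \<noteq> {} \<and> b - Q \<noteq> {})"

end

theory Submission
  imports Defs
begin

definition rr :: "nat \<Rightarrow> nat \<Rightarrow> nat" where "rr m x = (if x < m then x else x - m)"
definition tt :: "nat \<Rightarrow> nat" where "tt s = (if s = 0 then 0 else if s = 1 then 2 else (1::nat))"
definition blk :: "nat \<Rightarrow> nat \<Rightarrow> nat \<Rightarrow> nat set" where
  "blk m i s = {i, m + rr m (i + tt s), 2*m + rr m (i + s)}"
definition gg :: "nat \<Rightarrow> nat \<Rightarrow> nat \<Rightarrow> nat" where
  "gg m x s = (if x < m then x else if x < 2*m then rr m (x - tt s) else rr m (x - m - s))"
definition B0 :: "nat \<Rightarrow> nat set set" where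
  "B0 m = (\<lambda>(i,s). blk m i s) ` ({..<m} \<times> {..<3})"

lemma s3: "(s::nat) < 3 \<longleftrightarrow> s = 0 \<or> s = 1 \<or> s = 2" by auto

lemma mem_blk:
  assumes "m \<ge> 3" "i < m" "s < 3" "x < 3*m"
  shows "x \<in> blk m i s \<longleftrightarrow> i = gg m x s"
  using assms unfolding s3 by (auto simp: blk_def gg_def rr_def tt_def)

lemma blk_sub: "m \<ge> 3 \<Longrightarrow> i < m \<Longrightarrow> s < 3 \<Longrightarrow> blk m i s \<subseteq> {..<3*m}"
  unfolding s3 by (auto simp: blk_def rr_def tt_def)

lemma blk_card: "m \<ge> 3 \<Longrightarrow> i < m \<Longrightarrow> s < 3 \<Longrightarrow> card (blk m i s) = 3"
  unfolding s3 by (auto simp: blk_def rr_def tt_def)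

lemma rr_lt: "x < 2*m \<Longrightarrow> rr m x < m" by (auto simp: rr_def)
lemma tt_le: "tt s \<le> 2" by (auto simp: tt_def)

lemma blk_inj: "m \<ge> 3 \<Longrightarrow> i < m \<Longrightarrow> s < 3 \<Longrightarrow> i' < m \<Longrightarrow> s' < 3 \<Longrightarrow>
   blk m i s = blk m i' s' \<Longrightarrow> i = i' \<and> s = s'"
proof -
  assume a: "m \<ge> 3" "i < m" "s < 3" "i' < m" "s' < 3" "blk m i s = blk m i' s'"
  have c: "2*m + rr m (i + s) \<in> blk m i' s'" using a(6) unfolding blk_def by blast
  have "i \<in> blk m i' s'" using a(6) unfolding blk_def by blast
  then have ii: "i = i'" using a unfolding blk_def by auto
  have "rr m (i' + tt s') < m" "rr m (i + s) < m" using a tt_le[of s'] by (auto intro!: rr_lt)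
  then have "rr m (i + s) = rr m (i' + s')" using c a(4) unfolding blk_def by auto
  then show ?thesis using a ii by (auto simp: rr_def split: if_splits)
qed

lemma HC: "m \<ge> 3 \<Longrightarrow> i < m \<Longrightarrow> s < 3 \<Longrightarrow> i' < m \<Longrightarrow> s' < 3 \<Longrightarrow>
  rr m (i + tt s) = rr m (i' + tt s') \<Longrightarrow> rr m (i+s) = rr m (i'+s') \<Longrightarrow> i = i' \<and> s = s'"
  unfolding s3 rr_def tt_def by (elim disjE; simp split: if_splits; linarith)

lemma LH: "m \<ge> 3 \<Longrightarrow> i < m \<Longrightarrow> s < 3 \<Longrightarrow> s' < 3 \<Longrightarrow>
  rr m (i + tt s) = rr m (i + tt s') \<Longrightarrow> s = s'"
  unfolding s3 rr_def tt_def by (elim disjE; simp split: if_splits; linarith)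
lemma LC: "m \<ge> 3 \<Longrightarrow> i < m \<Longrightarrow> s < 3 \<Longrightarrow> s' < 3 \<Longrightarrow>
  rr m (i + s) = rr m (i + s') \<Longrightarrow> s = s'"
  unfolding s3 rr_def by (elim disjE; simp split: if_splits; linarith)

lemma blk_kind:
  assumes "m \<ge> 3" "i < m" "s < 3" "i' < m" "s' < 3" "x \<in> blk m i s" "x \<in> blk m i' s'"
  shows "(x = i \<and> x = i') \<or> (rr m (i + tt s) = rr m (i' + tt s') \<and> x = m + rr m (i + tt s))
     \<or> (rr m (i + s) = rr m (i' + s') \<and> x = 2*m + rr m (i + s))"
proof -
  have "rr m (i' + tt s') < m" "rr m (i + s) < m" "rr m (i + tt s) < m" "rr m (i' + s') < m"
    using assms tt_le[of s'] tt_le[of s] by (auto intro!: rr_lt)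
  then show ?thesis using assms(2,4,6,7) unfolding blk_def by auto
qed

lemma blk_pair: "m \<ge> 3 \<Longrightarrow> i < m \<Longrightarrow> s < 3 \<Longrightarrow> i' < m \<Longrightarrow> s' < 3 \<Longrightarrow> x \<noteq> y \<Longrightarrow>
   x \<in> blk m i s \<Longrightarrow> y \<in> blk m i s \<Longrightarrow> x \<in> blk m i' s' \<Longrightarrow> y \<in> blk m i' s' \<Longrightarrow> i = i' \<and> s = s'"
  using blk_kind[of m i s i' s' x] blk_kind[of m i s i' s' y] HC[of m i s i' s'] LH[of m i s s'] LC[of m i s s']
  by auto

lemma gg_lt: "m \<ge> 3 \<Longrightarrow> s < 3 \<Longrightarrow> x < 3*m \<Longrightarrow> gg m x s < m"
  unfolding s3 by (auto simp: gg_def rr_def tt_def)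

lemma deg_set:
  assumes "m \<ge> 3" "x < 3*m"
  shows "{b \<in> B0 m. x \<in> b} = (\<lambda>s. blk m (gg m x s) s) ` {..<3}"
proof
  show "{b \<in> B0 m. x \<in> b} \<subseteq> (\<lambda>s. blk m (gg m x s) s) ` {..<3}"
  proof
    fix b assume "b \<in> {b \<in> B0 m. x \<in> b}"
    then obtain i s where "i < m" "s < 3" "b = blk m i s" "x \<in> b" unfolding B0_def by auto
    then show "b \<in> (\<lambda>s. blk m (gg m x s) s) ` {..<3}" using mem_blk[of m i s x] assms by auto
  qed
  show "(\<lambda>s. blk m (gg m x s) s) ` {..<3} \<subseteq> {b \<in> B0 m. x \<in> b}"
  proof
    fix b assume "b \<in> (\<lambda>s. blk m (gg m x s) s) ` {..<3}"
    then obtain s where "s < 3" "b = blk m (gg m x s) s" by auto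
    then show "b \<in> {b \<in> B0 m. x \<in> b}" using mem_blk[of m "gg m x s" s x] gg_lt[of m s x] assms
      unfolding B0_def by auto
  qed
qed

lemma base_config: assumes "m \<ge> 3" shows "sym_config3 {..<3*m} (B0 m)"
proof -
  let ?f = "\<lambda>(i,s). blk m i s" and ?I = "{..<m} \<times> {..<(3::nat)}"
  have inj: "inj_on ?f ?I" using blk_inj[OF assms] by (auto simp: inj_on_def)
  have cB: "card (B0 m) = card {..<3*m}" unfolding B0_def using card_image[OF inj] by simp
  have blocks: "\<forall>b\<in>B0 m. b \<subseteq> {..<3*m} \<and> card b = 3"
    unfolding B0_def using blk_sub[OF assms] blk_card[OF assms] by auto
  have deg: "\<forall>p\<in>{..<3*m}. card {b\<in>B0 m. p \<in> b} = 3"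
  proof
    fix p assume p: "p \<in> {..<3*m}"
    have "inj_on (\<lambda>s. blk m (gg m p s) s) {..<3}"
      unfolding inj_on_def
    proof (intro ballI impI)
      fix x y assume "x \<in> {..<3::nat}" "y \<in> {..<3::nat}" "blk m (gg m p x) x = blk m (gg m p y) y"
      then show "x = y" using blk_inj[OF assms, of "gg m p x" x "gg m p y" y] gg_lt[OF assms] p by auto
    qed
    then show "card {b\<in>B0 m. p \<in> b} = 3" using deg_set[OF assms, of p] p card_image by fastforce
  qed
  have pair: "\<forall>p\<in>{..<3*m}. \<forall>p'\<in>{..<3*m}. p \<noteq> p' \<longrightarrow> card {b\<in>B0 m. p \<in> b \<and> p' \<in> b} \<le> 1"
  proof (intro ballI impI)
    fix p p' assume "p \<in> {..<3*m}" "p' \<in> {..<3*m}" "p \<noteq> p'"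
    have fin: "finite (B0 m)" unfolding B0_def by simp
    have "\<forall>a\<in>{b\<in>B0 m. p \<in> b \<and> p' \<in> b}. \<forall>b\<in>{b\<in>B0 m. p \<in> b \<and> p' \<in> b}. a = b"
      using blk_pair[OF assms _ _ _ _ \<open>p \<noteq> p'\<close>] unfolding B0_def by blast
    then show "card {b\<in>B0 m. p \<in> b \<and> p' \<in> b} \<le> 1"
      using card_le_Suc0_iff_eq[of "{b\<in>B0 m. p \<in> b \<and> p' \<in> b}"] fin by auto
  qed
  show ?thesis unfolding sym_config3_def using cB blocks deg pair by auto
qed

lemma card1_crit: "finite A \<Longrightarrow> (\<And>a b. a \<in> A \<Longrightarrow> b \<in> A \<Longrightarrow> a = b) \<Longrightarrow> card A \<le> 1"
  using card_le_Suc0_iff_eq[of A] by (simp add: One_nat_def)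

lemma delete_point:
  assumes sc: "sym_config3 P B" and p: "p \<in> P"
  and N: "N1 \<inter> N2 = {}" "N1 \<union> N2 = \<Union>{b\<in>B. p\<in>b} - {p}" "card N1 = 3" "card N2 = 3" "N1 \<notin> B" "N2 \<notin> B"
  and pr: "\<forall>b\<in>B. p \<notin> b \<longrightarrow> (\<forall>x\<in>b\<inter>N1. \<forall>y\<in>b\<inter>N1. x=y) \<and> (\<forall>x\<in>b\<inter>N2. \<forall>y\<in>b\<inter>N2. x=y)"
  shows "sym_config3 (P - {p}) ({b\<in>B. p\<notin>b} \<union> {N1,N2})"
proof -
  define D where "D = {b\<in>B. p\<in>b}"
  define R where "R = {b\<in>B. p\<notin>b}"
  have finP: "finite P" and cBP: "card B = card P" and bl: "\<forall>b\<in>B. b \<subseteq> P \<and> card b = 3"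
    and deg: "\<forall>x\<in>P. card {b\<in>B. x \<in> b} = 3"
    and prs: "\<forall>x\<in>P. \<forall>y\<in>P. x \<noteq> y \<longrightarrow> card {b\<in>B. x \<in> b \<and> y \<in> b} \<le> 1"
    using sc unfolding sym_config3_def by auto
  have "card P > 0" using p finP card_gt_0_iff by blast
  then have finB: "finite B" using cBP card_ge_0_finite by metis
  have cD: "card D = 3" using deg p unfolding D_def by auto
  have BDR: "B = D \<union> R" "D \<inter> R = {}" unfolding D_def R_def by auto
  have finR: "finite R" "finite D" using finB unfolding D_def R_def by auto
  have cR: "card R + 3 = card B" using card_Un_disjoint[OF finR(2) finR(1) BDR(2)] BDR(1) cD by simp
  have N12: "N1 \<noteq> N2" using N(1,3) by auto
  have NR: "N1 \<notin> R" "N2 \<notin> R" using N(5,6) unfolding R_def by auto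
  have cNew: "card (R \<union> {N1,N2}) = card R + 2"
    using finR NR N12 by (simp add: card_insert_if)
  have cP1: "card (P - {p}) = card P - 1" using p finP by simp
  have Nsub: "N1 \<subseteq> P - {p}" "N2 \<subseteq> P - {p}" using N(2) bl by auto
  have part1: "card (R \<union> {N1,N2}) = card (P - {p})" using cNew cP1 cR cBP by simp
  have part2: "\<forall>b\<in>R \<union> {N1,N2}. b \<subseteq> P - {p} \<and> card b = 3"
    using bl Nsub N(3,4) unfolding R_def by auto
  have part3: "\<forall>x\<in>P - {p}. card {b\<in>R \<union> {N1,N2}. x \<in> b} = 3"
  proof
    fix x assume x: "x \<in> P - {p}"
    define k where "k = card {b\<in>D. x \<in> b}"
    have eqD: "{b\<in>D. x \<in> b} = {b\<in>B. x \<in> b \<and> p \<in> b}" unfolding D_def by auto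
    have k1: "k \<le> 1" using prs x p unfolding k_def eqD by auto
    have finDx: "finite {b\<in>D. x \<in> b}" using finR by auto
    have cN: "card {n\<in>{N1,N2}. x \<in> n} = k"
    proof (cases "x \<in> N1 \<union> N2")
      case True
      then have "{b\<in>D. x \<in> b} \<noteq> {}" using N(2) unfolding D_def by auto
      then have "k \<ge> 1" unfolding k_def using finDx by (simp add: Suc_le_eq card_gt_0_iff)
      then have "k = 1" using k1 by simp
      moreover have "card {n\<in>{N1,N2}. x \<in> n} = 1"
      proof (cases "x \<in> N1")
        case True
        then have "{n\<in>{N1,N2}. x \<in> n} = {N1}" using N(1) by auto
        then show ?thesis by simp
      next
        case False
        then have "{n\<in>{N1,N2}. x \<in> n} = {N2}" using \<open>x \<in> N1 \<union> N2\<close> by auto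
        then show ?thesis by simp
      qed
      ultimately show ?thesis by simp
    next
      case False
      then have "{b\<in>D. x \<in> b} = {}" using N(2) x unfolding D_def by auto
      then have "k = 0" unfolding k_def by (metis card.empty)
      moreover have "{n\<in>{N1,N2}. x \<in> n} = {}" using False by auto
      ultimately show ?thesis by simp
    qed
    have eqR: "{b\<in>R. x \<in> b} = {b\<in>B. x \<in> b} - {b\<in>D. x \<in> b}" unfolding R_def D_def by auto
    have cRx: "card {b\<in>R. x \<in> b} = 3 - k"
    proof -
      have "{b\<in>D. x \<in> b} \<subseteq> {b\<in>B. x \<in> b}" unfolding D_def by auto
      then show ?thesis unfolding eqR k_def using card_Diff_subset[OF finDx] deg x by auto
    qed
    have spl: "{b\<in>R \<union> {N1,N2}. x \<in> b} = {b\<in>R. x \<in> b} \<union> {n\<in>{N1,N2}. x \<in> n}" by auto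
    have disj: "{b\<in>R. x \<in> b} \<inter> {n\<in>{N1,N2}. x \<in> n} = {}" using NR by auto
    have "card {b\<in>R \<union> {N1,N2}. x \<in> b} = (3 - k) + k"
      unfolding spl using card_Un_disjoint[OF _ _ disj] finR cRx cN by simp
    then show "card {b\<in>R \<union> {N1,N2}. x \<in> b} = 3" using k1 by simp
  qed
  have part4: "\<forall>x\<in>P - {p}. \<forall>y\<in>P - {p}. x \<noteq> y \<longrightarrow> card {b\<in>R \<union> {N1,N2}. x \<in> b \<and> y \<in> b} \<le> 1"
  proof (intro ballI impI)
    fix x y assume x: "x \<in> P - {p}" and y: "y \<in> P - {p}" and xy: "x \<noteq> y"
    have old: "card {b\<in>B. x \<in> b \<and> y \<in> b} \<le> 1" using prs x y xy by auto
    have finO: "finite {b\<in>B. x \<in> b \<and> y \<in> b}" using finB by auto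
    show "card {b\<in>R \<union> {N1,N2}. x \<in> b \<and> y \<in> b} \<le> 1"
    proof (rule card1_crit)
      show "finite {b\<in>R \<union> {N1,N2}. x \<in> b \<and> y \<in> b}" using finR by auto
    next
      fix a b assume a: "a \<in> {b\<in>R \<union> {N1,N2}. x \<in> b \<and> y \<in> b}" and b: "b \<in> {b\<in>R \<union> {N1,N2}. x \<in> b \<and> y \<in> b}"
      have oldeq: "\<And>a b. a \<in> {b\<in>B. x \<in> b \<and> y \<in> b} \<Longrightarrow> b \<in> {b\<in>B. x \<in> b \<and> y \<in> b} \<Longrightarrow> a = b"
        using old card_le_Suc0_iff_eq[OF finO] by simp
      have noN: "\<And>c n. c \<in> R \<Longrightarrow> n \<in> {N1,N2} \<Longrightarrow> x \<in> c \<Longrightarrow> y \<in> c \<Longrightarrow> x \<in> n \<Longrightarrow> y \<in> n \<Longrightarrow> False"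
        proof -
        fix c n assume "c \<in> R" "n \<in> {N1,N2}" "x \<in> c" "y \<in> c" "x \<in> n" "y \<in> n"
        then have "c \<in> B" "p \<notin> c" unfolding R_def by auto
        then have "(\<forall>x\<in>c\<inter>N1. \<forall>y\<in>c\<inter>N1. x=y) \<and> (\<forall>x\<in>c\<inter>N2. \<forall>y\<in>c\<inter>N2. x=y)" using pr by blast
        then show False using \<open>n \<in> {N1,N2}\<close> \<open>x \<in> c\<close> \<open>y \<in> c\<close> \<open>x \<in> n\<close> \<open>y \<in> n\<close> xy by auto
      qed
      show "a = b"
      proof (cases "a \<in> R")
        case True
        show ?thesis
        proof (cases "b \<in> R")
          case True
          then show ?thesis using \<open>a \<in> R\<close> a b oldeq unfolding R_def by auto
        next
          case False
          then show ?thesis using noN[of a b] True a b by auto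
        qed
      next
        case False
        show ?thesis
        proof (cases "b \<in> R")
          case True
          then show ?thesis using noN[of b a] False a b by auto
        next
          case False
          then show ?thesis using \<open>a \<notin> R\<close> a b N(1) xy by auto
        qed
      qed
    qed
  qed
  show ?thesis unfolding sym_config3_def R_def[symmetric]
    using finP part1 part2 part3 part4 by auto
qed

lemma conn_crit:
  assumes sc: "sym_config3 P B"
  and hit: "\<forall>b\<in>B. \<exists>y\<in>b. y < m"
  and chain: "\<forall>i. Suc i < m \<longrightarrow> (\<exists>b\<in>B. \<exists>b'\<in>B. \<exists>z. i \<in> b \<and> z \<in> b \<and> z \<in> b' \<and> Suc i \<in> b')"
  shows "config_connected P B"
  unfolding config_connected_def
proof
  assume "\<exists>P1 P2. P1 \<noteq> {} \<and> P2 \<noteq> {} \<and> P1 \<inter> P2 = {} \<and> P1 \<union> P2 = P \<and> (\<forall>b\<in>B. b \<subseteq> P1 \<or> b \<subseteq> P2)"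
  then obtain P1 P2 where p: "P1 \<noteq> {}" "P2 \<noteq> {}" "P1 \<inter> P2 = {}" "P1 \<union> P2 = P" "\<forall>b\<in>B. b \<subseteq> P1 \<or> b \<subseteq> P2"
    by blast
  have same: "\<And>b x y. b \<in> B \<Longrightarrow> x \<in> b \<Longrightarrow> y \<in> b \<Longrightarrow> (x \<in> P1 \<longleftrightarrow> y \<in> P1)"
    using p(3,5) by blast
  have L: "\<And>i. i < m \<Longrightarrow> (i \<in> P1 \<longleftrightarrow> 0 \<in> P1)"
  proof -
    fix i show "i < m \<Longrightarrow> (i \<in> P1 \<longleftrightarrow> 0 \<in> P1)"
    proof (induction i)
      case 0 then show ?case by simp
    next
      case (Suc i)
      then obtain b b' z where "b \<in> B" "b' \<in> B" "i \<in> b" "z \<in> b" "z \<in> b'" "Suc i \<in> b'" using chain by blast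
      then have "Suc i \<in> P1 \<longleftrightarrow> i \<in> P1" using same by metis
      then show ?case using Suc by simp
    qed
  qed
  have deg: "\<forall>x\<in>P. card {b\<in>B. x \<in> b} = 3" using sc unfolding sym_config3_def by auto
  have all: "\<And>x. x \<in> P \<Longrightarrow> (x \<in> P1 \<longleftrightarrow> 0 \<in> P1)"
  proof -
    fix x assume "x \<in> P"
    then have "{b\<in>B. x \<in> b} \<noteq> {}" using deg by (metis card.empty zero_neq_numeral)
    then obtain b where "b \<in> B" "x \<in> b" by auto
    then obtain y where "y \<in> b" "y < m" using hit by auto
    then show "x \<in> P1 \<longleftrightarrow> 0 \<in> P1" using L same \<open>b \<in> B\<close> \<open>x \<in> b\<close> by metis
  qed
  show False
  proof (cases "0 \<in> P1")
    case True
    then have "P \<subseteq> P1" using all by auto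
    then show False using p by auto
  next
    case False
    then have "P \<inter> P1 = {}" using all by auto
    then show False using p by auto
  qed
qed

lemma blk_in_B0: "i < m \<Longrightarrow> s < 3 \<Longrightarrow> blk m i s \<in> B0 m" unfolding B0_def by auto

lemma blk_L: "x \<in> blk m i s \<Longrightarrow> x < m \<Longrightarrow> i < m \<Longrightarrow> x = i"
  unfolding blk_def by auto
lemma blk_H: "m \<ge> 3 \<Longrightarrow> s < 3 \<Longrightarrow> i < m \<Longrightarrow> x \<in> blk m i s \<Longrightarrow> m \<le> x \<Longrightarrow> x < 2*m \<Longrightarrow> x = m + rr m (i + tt s)"
  using rr_lt[of "i+s" m] unfolding blk_def by auto
lemma blk_C: "2*m + rr m (i + s) \<in> blk m i s" unfolding blk_def by auto

lemma hitB0: assumes "m \<ge> 3" "b \<in> B0 m" shows "(\<exists>y\<in>b. y < m) \<and> (\<exists>y\<in>b. m \<le> y \<and> y < 2*m)"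
proof -
  obtain i s where ii: "i < m" "s < 3" "b = blk m i s" using assms(2) unfolding B0_def by auto
  have "rr m (i + tt s) < m" using rr_lt[of "i + tt s" m] tt_le[of s] ii assms(1) by auto
  then show ?thesis using ii unfolding blk_def by auto
qed

definition N1 :: "nat \<Rightarrow> nat set" where "N1 k = {k+3, 2*k+7, 2*k+6}"
definition N2 :: "nat \<Rightarrow> nat set" where "N2 k = {k+2, k+1, k+4}"
definition B1 :: "nat \<Rightarrow> nat set set" where "B1 k = {b\<in>B0 (k+4). 3*k+11 \<notin> b} \<union> {N1 k, N2 k}"

lemma lt3: "{..<3::nat} = {0,1,2}" by auto

lemma D1: "{b\<in>B0 (k+4). 3*k+11 \<in> b} = {blk (k+4) (k+3) 0, blk (k+4) (k+2) 1, blk (k+4) (k+1) 2}"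
proof -
  have "\<And>s. s < 3 \<Longrightarrow> gg (k+4) (3*k+11) s = k + 3 - s" by (auto simp: gg_def rr_def)
  then show ?thesis using deg_set[of "k+4" "3*k+11"] unfolding lt3 by auto
qed

lemma U1: "\<Union>{b\<in>B0 (k+4). 3*k+11 \<in> b} - {3*k+11} = N1 k \<union> N2 k"
  unfolding D1 by (simp add: blk_def rr_def tt_def N1_def N2_def) auto

lemma pr1: "i < k+4 \<Longrightarrow> s < 3 \<Longrightarrow> 3*k+11 \<notin> blk (k+4) i s \<Longrightarrow> x \<in> blk (k+4) i s \<Longrightarrow> y \<in> blk (k+4) i s
  \<Longrightarrow> x \<in> N1 k \<Longrightarrow> y \<in> N1 k \<Longrightarrow> x = y"
  unfolding s3 blk_def N1_def rr_def tt_def by (elim disjE; simp split: if_splits; linarith)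

lemma pr2: "i < k+4 \<Longrightarrow> s < 3 \<Longrightarrow> 3*k+11 \<notin> blk (k+4) i s \<Longrightarrow> x \<in> blk (k+4) i s \<Longrightarrow> y \<in> blk (k+4) i s
  \<Longrightarrow> x \<in> N2 k \<Longrightarrow> y \<in> N2 k \<Longrightarrow> x = y"
  unfolding s3 blk_def N2_def rr_def tt_def by (elim disjE; simp split: if_splits; linarith)

lemma N1_notin: "N1 k \<notin> B0 (k+4)"
proof
  assume "N1 k \<in> B0 (k+4)"
  then obtain i s where ii: "i < k+4" "s < 3" "N1 k = blk (k+4) i s" unfolding B0_def by auto
  have "2*k+7 \<in> blk (k+4) i s" "2*k+6 \<in> blk (k+4) i s" using ii(3) unfolding N1_def by auto
  then have "2*k+7 = (k+4) + rr (k+4) (i + tt s)" "2*k+6 = (k+4) + rr (k+4) (i + tt s)"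
    using blk_H[of "k+4" s i "2*k+7"] blk_H[of "k+4" s i "2*k+6"] ii by auto
  then show False by simp
qed

lemma N2_notin: "N2 k \<notin> B0 (k+4)"
proof
  assume "N2 k \<in> B0 (k+4)"
  then obtain i s where ii: "i < k+4" "s < 3" "N2 k = blk (k+4) i s" unfolding B0_def by auto
  have "k+2 \<in> blk (k+4) i s" "k+1 \<in> blk (k+4) i s" using ii(3) unfolding N2_def by auto
  then have "k+2 = i" "k+1 = i" using blk_L[of _ "k+4" i s] ii by auto
  then show False by simp
qed

lemma conf1: "sym_config3 {..<3*k+11} (B1 k)"
proof -
  have "sym_config3 ({..<3*(k+4)} - {3*k+11}) ({b\<in>B0 (k+4). 3*k+11\<notin>b} \<union> {N1 k, N2 k})"
  proof (rule delete_point)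
    show "sym_config3 {..<3*(k+4)} (B0 (k+4))" by (rule base_config) simp
    show "3*k+11 \<in> {..<3*(k+4)}" by simp
    show "N1 k \<inter> N2 k = {}" by (auto simp: N1_def N2_def)
    show "N1 k \<union> N2 k = \<Union>{b\<in>B0 (k+4). 3*k+11\<in>b} - {3*k+11}" using U1 by simp
    show "card (N1 k) = 3" "card (N2 k) = 3" by (auto simp: N1_def N2_def)
    show "N1 k \<notin> B0 (k+4)" "N2 k \<notin> B0 (k+4)" using N1_notin N2_notin by auto
    show "\<forall>b\<in>B0 (k+4). 3*k+11 \<notin> b \<longrightarrow> (\<forall>x\<in>b\<inter>N1 k. \<forall>y\<in>b\<inter>N1 k. x=y) \<and> (\<forall>x\<in>b\<inter>N2 k. \<forall>y\<in>b\<inter>N2 k. x=y)"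
      unfolding B0_def using pr1 pr2 by fastforce
  qed
  moreover have "{..<3*(k+4)} - {3*k+11} = {..<3*k+11}" by auto
  ultimately show ?thesis unfolding B1_def by simp
qed

definition N3 :: "nat \<Rightarrow> nat set" where "N3 k = {k+1, k, 2*k+7}"
definition N4 :: "nat \<Rightarrow> nat set" where "N4 k = {k+2, 2*k+6, 2*k+5}"
definition B2 :: "nat \<Rightarrow> nat set set" where "B2 k = {b\<in>B1 k. 3*k+10 \<notin> b} \<union> {N3 k, N4 k}"

lemma blk_C_unique: "s < 3 \<Longrightarrow> i < m \<Longrightarrow> m \<ge> 3 \<Longrightarrow> x \<in> blk m i s \<Longrightarrow> y \<in> blk m i s \<Longrightarrow> 2*m \<le> x \<Longrightarrow> 2*m \<le> y \<Longrightarrow> x = y"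
  using rr_lt[of "i + tt s" m] tt_le[of s] unfolding blk_def by auto

lemma D2: "{b\<in>B1 k. 3*k+10 \<in> b} = {blk (k+4) (k+2) 0, blk (k+4) (k+1) 1, blk (k+4) k 2}"
proof -
  have "{b\<in>B1 k. 3*k+10 \<in> b} = {b\<in>B0 (k+4). 3*k+10 \<in> b}"
  proof -
    have "\<And>b. b \<in> B0 (k+4) \<Longrightarrow> 3*k+10 \<in> b \<Longrightarrow> 3*k+11 \<notin> b"
    proof
      fix b assume "b \<in> B0 (k+4)" "3*k+10 \<in> b" "3*k+11 \<in> b"
      then obtain i s where "i < k+4" "s < 3" "b = blk (k+4) i s" unfolding B0_def by auto
      then show False using blk_C_unique[of s i "k+4" "3*k+10" "3*k+11"] \<open>3*k+10 \<in> b\<close> \<open>3*k+11 \<in> b\<close> by auto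
    qed
    then show ?thesis unfolding B1_def by (auto simp: N1_def N2_def)
  qed
  moreover have "\<And>s. s < 3 \<Longrightarrow> gg (k+4) (3*k+10) s = k + 2 - s" by (auto simp: gg_def rr_def)
  ultimately show ?thesis using deg_set[of "k+4" "3*k+10"] unfolding lt3 by auto
qed

lemma U2: "\<Union>{b\<in>B1 k. 3*k+10 \<in> b} - {3*k+10} = N3 k \<union> N4 k"
  unfolding D2 by (simp add: blk_def rr_def tt_def N3_def N4_def) auto

lemma pr3: "i < k+4 \<Longrightarrow> s < 3 \<Longrightarrow> 3*k+10 \<notin> blk (k+4) i s \<Longrightarrow> x \<in> blk (k+4) i s \<Longrightarrow> y \<in> blk (k+4) i s
  \<Longrightarrow> x \<in> N3 k \<Longrightarrow> y \<in> N3 k \<Longrightarrow> x = y"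
  unfolding s3 blk_def N3_def rr_def tt_def by (elim disjE; simp split: if_splits; linarith)

lemma pr4: "i < k+4 \<Longrightarrow> s < 3 \<Longrightarrow> 3*k+10 \<notin> blk (k+4) i s \<Longrightarrow> x \<in> blk (k+4) i s \<Longrightarrow> y \<in> blk (k+4) i s
  \<Longrightarrow> x \<in> N4 k \<Longrightarrow> y \<in> N4 k \<Longrightarrow> x = y"
  unfolding s3 blk_def N4_def rr_def tt_def by (elim disjE; simp split: if_splits; linarith)

lemma N3_notin: "N3 k \<notin> B1 k"
proof
  assume "N3 k \<in> B1 k"
  moreover have "N3 k \<noteq> N1 k" "N3 k \<noteq> N2 k" unfolding N1_def N2_def N3_def by (auto simp: insert_eq_iff) 
  ultimately have "N3 k \<in> B0 (k+4)" unfolding B1_def by auto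
  then obtain i s where ii: "i < k+4" "s < 3" "N3 k = blk (k+4) i s" unfolding B0_def by auto
  have "k+1 \<in> blk (k+4) i s" "k \<in> blk (k+4) i s" using ii(3) unfolding N3_def by auto
  then have "k+1 = i" "k = i" using blk_L[of _ "k+4" i s] ii by auto
  then show False by simp
qed

lemma N4_notin: "N4 k \<notin> B1 k"
proof
  assume "N4 k \<in> B1 k"
  moreover have "N4 k \<noteq> N1 k" "N4 k \<noteq> N2 k" unfolding N1_def N2_def N4_def by (auto simp: insert_eq_iff)
  ultimately have "N4 k \<in> B0 (k+4)" unfolding B1_def by auto
  then obtain i s where ii: "i < k+4" "s < 3" "N4 k = blk (k+4) i s" unfolding B0_def by auto
  have "2*k+6 \<in> blk (k+4) i s" "2*k+5 \<in> blk (k+4) i s" using ii(3) unfolding N4_def by auto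
  then have "2*k+6 = (k+4) + rr (k+4) (i + tt s)" "2*k+5 = (k+4) + rr (k+4) (i + tt s)"
    using blk_H[of "k+4" s i "2*k+6"] blk_H[of "k+4" s i "2*k+5"] ii by auto
  then show False by simp
qed

lemma conf2: "sym_config3 {..<3*k+10} (B2 k)"
proof -
  have "sym_config3 ({..<3*k+11} - {3*k+10}) ({b\<in>B1 k. 3*k+10\<notin>b} \<union> {N3 k, N4 k})"
  proof (rule delete_point)
    show "sym_config3 {..<3*k+11} (B1 k)" by (rule conf1)
    show "3*k+10 \<in> {..<3*k+11}" by simp
    show "N3 k \<inter> N4 k = {}" by (auto simp: N3_def N4_def)
    show "N3 k \<union> N4 k = \<Union>{b\<in>B1 k. 3*k+10\<in>b} - {3*k+10}" using U2 by simp
    show "card (N3 k) = 3" "card (N4 k) = 3" by (auto simp: N3_def N4_def)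
    show "N3 k \<notin> B1 k" "N4 k \<notin> B1 k" using N3_notin N4_notin by auto
    have a: "\<forall>b\<in>B0 (k+4). 3*k+10 \<notin> b \<longrightarrow> (\<forall>x\<in>b\<inter>N3 k. \<forall>y\<in>b\<inter>N3 k. x=y) \<and> (\<forall>x\<in>b\<inter>N4 k. \<forall>y\<in>b\<inter>N4 k. x=y)"
      unfolding B0_def using pr3 pr4 by fastforce
    have b: "\<forall>b\<in>{N1 k, N2 k}. (\<forall>x\<in>b\<inter>N3 k. \<forall>y\<in>b\<inter>N3 k. x=y) \<and> (\<forall>x\<in>b\<inter>N4 k. \<forall>y\<in>b\<inter>N4 k. x=y)"
    proof -
      have "N1 k \<inter> N3 k = {2*k+7}" "N1 k \<inter> N4 k = {2*k+6}" "N2 k \<inter> N3 k = {k+1}" "N2 k \<inter> N4 k = {k+2}"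
        unfolding N1_def N2_def N3_def N4_def by auto
      then show ?thesis by (simp add: Int_commute)
    qed
    show "\<forall>b\<in>B1 k. 3*k+10 \<notin> b \<longrightarrow> (\<forall>x\<in>b\<inter>N3 k. \<forall>y\<in>b\<inter>N3 k. x=y) \<and> (\<forall>x\<in>b\<inter>N4 k. \<forall>y\<in>b\<inter>N4 k. x=y)"
    proof (intro ballI impI)
      fix b assume "b \<in> B1 k" "3*k+10 \<notin> b"
      then have "(b \<in> B0 (k+4) \<and> 3*k+10 \<notin> b) \<or> b \<in> {N1 k, N2 k}" unfolding B1_def by auto
      then show "(\<forall>x\<in>b\<inter>N3 k. \<forall>y\<in>b\<inter>N3 k. x=y) \<and> (\<forall>x\<in>b\<inter>N4 k. \<forall>y\<in>b\<inter>N4 k. x=y)"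
        using a b by metis
    qed
  qed
  moreover have "{..<3*k+11} - {3*k+10} = {..<3*k+10}" by auto
  ultimately show ?thesis unfolding B2_def by simp
qed

lemma hit1: assumes "b \<in> B1 k" shows "(\<exists>y\<in>b. y < k+4) \<and> (\<exists>y\<in>b. k+4 \<le> y \<and> y < 2*(k+4))"
proof -
  have "b \<in> B0 (k+4) \<or> b = N1 k \<or> b = N2 k" using assms unfolding B1_def by auto
  moreover have "(\<exists>y\<in>N1 k. y < k+4) \<and> (\<exists>y\<in>N1 k. k+4 \<le> y \<and> y < 2*(k+4))" unfolding N1_def by auto
  moreover have "(\<exists>y\<in>N2 k. y < k+4) \<and> (\<exists>y\<in>N2 k. k+4 \<le> y \<and> y < 2*(k+4))" unfolding N2_def by auto
  ultimately show ?thesis using hitB0[of "k+4" b] by auto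
qed

lemma hit2: assumes "b \<in> B2 k" shows "(\<exists>y\<in>b. y < k+4) \<and> (\<exists>y\<in>b. k+4 \<le> y \<and> y < 2*(k+4))"
proof -
  have "b \<in> B1 k \<or> b = N3 k \<or> b = N4 k" using assms unfolding B2_def by auto
  moreover have "(\<exists>y\<in>N3 k. y < k+4) \<and> (\<exists>y\<in>N3 k. k+4 \<le> y \<and> y < 2*(k+4))" unfolding N3_def by auto
  moreover have "(\<exists>y\<in>N4 k. y < k+4) \<and> (\<exists>y\<in>N4 k. k+4 \<le> y \<and> y < 2*(k+4))" unfolding N4_def by auto
  ultimately show ?thesis using hit1[of b k] by auto
qed

lemma chain_blk:
  assumes "Suc i < m"
  shows "i \<in> blk m i 2 \<and> m + Suc i \<in> blk m i 2 \<and> m + Suc i \<in> blk m (Suc i) 0 \<and> Suc i \<in> blk m (Suc i) 0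
    \<and> 2*m + rr m (i+2) \<in> blk m i 2 \<and> 2*m + Suc i \<in> blk m (Suc i) 0"
  using assms by (auto simp: blk_def rr_def tt_def)

lemma Cmem_unique: "m \<ge> 3 \<Longrightarrow> i < m \<Longrightarrow> s < 3 \<Longrightarrow> c \<in> blk m i s \<Longrightarrow> 2*m \<le> c \<Longrightarrow> c = 2*m + rr m (i+s)"
  using blk_C_unique[of s i m c "2*m + rr m (i+s)"] blk_C by auto

lemma notC: "m \<ge> 3 \<Longrightarrow> i < m \<Longrightarrow> s < 3 \<Longrightarrow> 2*m \<le> p \<Longrightarrow> p \<noteq> 2*m + rr m (i+s) \<Longrightarrow> p \<notin> blk m i s"
  using Cmem_unique by blast

lemma conn0: assumes "m \<ge> 3" shows "config_connected {..<3*m} (B0 m)"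
proof (rule conn_crit)
  show "sym_config3 {..<3*m} (B0 m)" using base_config[OF assms] .
  show "\<forall>b\<in>B0 m. \<exists>y\<in>b. y < m" using hitB0[OF assms] by blast
  show "\<forall>i. Suc i < m \<longrightarrow> (\<exists>b\<in>B0 m. \<exists>b'\<in>B0 m. \<exists>z. i \<in> b \<and> z \<in> b \<and> z \<in> b' \<and> Suc i \<in> b')"
  proof (intro allI impI)
    fix i assume i: "Suc i < m"
    show "\<exists>b\<in>B0 m. \<exists>b'\<in>B0 m. \<exists>z. i \<in> b \<and> z \<in> b \<and> z \<in> b' \<and> Suc i \<in> b'"
      using chain_blk[OF i] blk_in_B0[of i m 2] blk_in_B0[of "Suc i" m 0] i by auto
  qed
qed

lemma conn1: "config_connected {..<3*k+11} (B1 k)"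
proof (rule conn_crit)
  show "sym_config3 {..<3*k+11} (B1 k)" using conf1 .
  show "\<forall>b\<in>B1 k. \<exists>y\<in>b. y < k+4" using hit1 by blast
  show "\<forall>i. Suc i < k+4 \<longrightarrow> (\<exists>b\<in>B1 k. \<exists>b'\<in>B1 k. \<exists>z. i \<in> b \<and> z \<in> b \<and> z \<in> b' \<and> Suc i \<in> b')"
  proof (intro allI impI)
    fix i assume i: "Suc i < k+4"
    consider "i \<le> k" | "i = k+1" | "i = k+2" using i by linarith
    then show "\<exists>b\<in>B1 k. \<exists>b'\<in>B1 k. \<exists>z. i \<in> b \<and> z \<in> b \<and> z \<in> b' \<and> Suc i \<in> b'"
    proof cases
      case 1
      have r: "rr (k+4) (i+2) = i+2" "rr (k+4) (Suc i + 0) = Suc i" using 1 by (auto simp: rr_def)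
      have "3*k+11 \<notin> blk (k+4) i 2" by (rule notC) (use 1 r in auto)
      moreover have "3*k+11 \<notin> blk (k+4) (Suc i) 0" by (rule notC) (use 1 r in auto)
      ultimately have "blk (k+4) i 2 \<in> B1 k" "blk (k+4) (Suc i) 0 \<in> B1 k"
        using blk_in_B0[of i "k+4" 2] blk_in_B0[of "Suc i" "k+4" 0] i unfolding B1_def by auto
      then show ?thesis using chain_blk[OF i] by blast
    next
      case 2
      have "N2 k \<in> B1 k" unfolding B1_def by auto
      then show ?thesis using 2 by (intro bexI[of _ "N2 k"]) (auto simp: N2_def)
    next
      case 3
      have "3*k+11 \<notin> blk (k+4) (k+2) 0" by (rule notC) (auto simp: rr_def)
      then have "blk (k+4) (k+2) 0 \<in> B1 k" using blk_in_B0[of "k+2" "k+4" 0] unfolding B1_def by auto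
      moreover have "N1 k \<in> B1 k" unfolding B1_def by auto
      moreover have "k+2 \<in> blk (k+4) (k+2) 0" "2*k+6 \<in> blk (k+4) (k+2) 0" by (auto simp: blk_def rr_def tt_def)
      moreover have "2*k+6 \<in> N1 k" "k+3 \<in> N1 k" by (auto simp: N1_def)
      ultimately have "i \<in> blk (k+4) (k+2) 0 \<and> 2*k+6 \<in> blk (k+4) (k+2) 0 \<and> 2*k+6 \<in> N1 k \<and> Suc i \<in> N1 k"
        "blk (k+4) (k+2) 0 \<in> B1 k" "N1 k \<in> B1 k" using 3 by (auto simp: N1_def)
      then show ?thesis by blast
    qed
  qed
qed

lemma conn2: "config_connected {..<3*k+10} (B2 k)"
proof (rule conn_crit)
  show "sym_config3 {..<3*k+10} (B2 k)" using conf2 .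
  show "\<forall>b\<in>B2 k. \<exists>y\<in>b. y < k+4" using hit2 by blast
  show "\<forall>i. Suc i < k+4 \<longrightarrow> (\<exists>b\<in>B2 k. \<exists>b'\<in>B2 k. \<exists>z. i \<in> b \<and> z \<in> b \<and> z \<in> b' \<and> Suc i \<in> b')"
  proof (intro allI impI)
    fix i assume i: "Suc i < k+4"
    consider "Suc i \<le> k" | "i = k" | "i = k+1" | "i = k+2" using i by linarith
    then show "\<exists>b\<in>B2 k. \<exists>b'\<in>B2 k. \<exists>z. i \<in> b \<and> z \<in> b \<and> z \<in> b' \<and> Suc i \<in> b'"
    proof cases
      case 1
      have r: "rr (k+4) (i+2) = i+2" "rr (k+4) (Suc i + 0) = Suc i" using 1 by (auto simp: rr_def)
      have "3*k+11 \<notin> blk (k+4) i 2" "3*k+10 \<notin> blk (k+4) i 2" by (rule notC; use 1 r in auto)+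
      moreover have "3*k+11 \<notin> blk (k+4) (Suc i) 0" "3*k+10 \<notin> blk (k+4) (Suc i) 0" by (rule notC; use 1 r in auto)+
      ultimately have "blk (k+4) i 2 \<in> B2 k" "blk (k+4) (Suc i) 0 \<in> B2 k"
        using blk_in_B0[of i "k+4" 2] blk_in_B0[of "Suc i" "k+4" 0] i unfolding B2_def B1_def by auto
      then show ?thesis using chain_blk[OF i] by blast
    next
      case 2
      have "N3 k \<in> B2 k" unfolding B2_def by auto
      then show ?thesis using 2 by (intro bexI[of _ "N3 k"]) (auto simp: N3_def)
    next
      case 3
      have "N2 k \<in> B2 k" unfolding B2_def B1_def by (auto simp: N2_def)
      then show ?thesis using 3 by (intro bexI[of _ "N2 k"]) (auto simp: N2_def)
    next
      case 4
      have "N4 k \<in> B2 k" unfolding B2_def by auto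
      moreover have "N1 k \<in> B2 k" unfolding B2_def B1_def by (auto simp: N1_def)
      moreover have "k+2 \<in> N4 k" "2*k+6 \<in> N4 k" by (auto simp: N4_def)
      moreover have "2*k+6 \<in> N1 k" "k+3 \<in> N1 k" by (auto simp: N1_def)
      ultimately have "i \<in> N4 k \<and> 2*k+6 \<in> N4 k \<and> 2*k+6 \<in> N1 k \<and> Suc i \<in> N1 k"
        "N4 k \<in> B2 k" "N1 k \<in> B2 k" using 4 by (auto simp: N1_def)
      then show ?thesis by blast
    qed
  qed
qed

lemma finish:
  assumes sc: "sym_config3 {..<v} B" and cc: "config_connected {..<v} B"
  and hit: "\<forall>b\<in>B. (\<exists>y\<in>b. y < m) \<and> (\<exists>y\<in>b. m \<le> y \<and> y < 2*m)"
  and mv: "m = (v+2) div 3"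
  shows "\<exists>B :: nat set set.
           sym_config3 {..<v} B \<and> config_connected {..<v} B \<and>
           (\<forall>q::nat. (v + 2) div 3 \<le> q \<and> q \<le> (2 * v) div 3 \<longrightarrow>
              (\<exists>Q. blocking_set {..<v} B Q \<and> card Q = q))"
proof (rule exI[of _ B], intro conjI allI impI)
  show "sym_config3 {..<v} B" using sc by auto
  show "config_connected {..<v} B" using cc by auto
  fix q assume q: "(v + 2) div 3 \<le> q \<and> q \<le> (2 * v) div 3"
  define Q where "Q = {..<m} \<union> {2*m..<q+m}"
  have qm1: "m \<le> q" using q mv by presburger
  have qm2: "q + m \<le> v" using q mv by presburger
  note qm = qm1 qm2
  have "card Q = m + (q + m - 2*m)" unfolding Q_def by (subst card_Un_disjoint) auto
  then have cQ: "card Q = q" using qm by simp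
  have "blocking_set {..<v} B Q" unfolding blocking_set_def
  proof (intro conjI ballI)
    show "Q \<subseteq> {..<v}" unfolding Q_def using qm by auto
    fix b assume "b \<in> B"
    then obtain y z where "y \<in> b" "y < m" "z \<in> b" "m \<le> z" "z < 2*m" using hit by blast
    then show "b \<inter> Q \<noteq> {}" "b - Q \<noteq> {}" unfolding Q_def by auto
  qed
  then show "\<exists>Q. blocking_set {..<v} B Q \<and> card Q = q" using cQ by blast
qed

theorem mainTheorem2:
  fixes v :: nat
  assumes "v \<ge> 9"
  shows "\<exists>B :: nat set set.
           sym_config3 {..<v} B \<and> config_connected {..<v} B \<and>
           (\<forall>q::nat. (v + 2) div 3 \<le> q \<and> q \<le> (2 * v) div 3 \<longrightarrow>
              (\<exists>Q. blocking_set {..<v} B Q \<and> card Q = q))"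
proof -
  have "v mod 3 = 0 \<or> v mod 3 = 2 \<or> v mod 3 = 1" by presburger
  then show ?thesis
  proof (elim disjE)
    assume 1: "v mod 3 = 0"
    define m where "m = v div 3"
    have v1: "v = 3*m" using 1 assms unfolding m_def by presburger
    have v2: "m \<ge> 3" using 1 assms unfolding m_def by presburger
    have v3: "m = (v+2) div 3" using 1 assms unfolding m_def by presburger
    note v = v1 v2 v3
    show ?thesis
    proof (rule finish[of v "B0 m" m])
      show "sym_config3 {..<v} (B0 m)" unfolding v(1) by (rule base_config[OF v(2)])
      show "config_connected {..<v} (B0 m)" unfolding v(1) by (rule conn0[OF v(2)])
      show "\<forall>b\<in>B0 m. (\<exists>y\<in>b. y < m) \<and> (\<exists>y\<in>b. m \<le> y \<and> y < 2*m)" using hitB0[OF v(2)] by blast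
      show "m = (v+2) div 3" by (rule v(3))
    qed
  next
    assume 2: "v mod 3 = 2"
    define k where "k = (v - 11) div 3"
    have v1: "v = 3*k+11" using 2 assms unfolding k_def by presburger
    have v2: "k+4 = (v+2) div 3" using 2 assms unfolding k_def by presburger
    note v = v1 v2
    show ?thesis
    proof (rule finish[of v "B1 k" "k+4"])
      show "sym_config3 {..<v} (B1 k)" unfolding v(1) by (rule conf1)
      show "config_connected {..<v} (B1 k)" unfolding v(1) by (rule conn1)
      show "\<forall>b\<in>B1 k. (\<exists>y\<in>b. y < k+4) \<and> (\<exists>y\<in>b. k+4 \<le> y \<and> y < 2*(k+4))" using hit1 by blast
      show "k+4 = (v+2) div 3" by (rule v(2))
    qed
  next
    assume 3: "v mod 3 = 1"
    define k where "k = (v - 10) div 3"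
    have v1: "v = 3*k+10" using 3 assms unfolding k_def by presburger
    have v2: "k+4 = (v+2) div 3" using 3 assms unfolding k_def by presburger
    note v = v1 v2
    show ?thesis
    proof (rule finish[of v "B2 k" "k+4"])
      show "sym_config3 {..<v} (B2 k)" unfolding v(1) by (rule conf2)
      show "config_connected {..<v} (B2 k)" unfolding v(1) by (rule conn2)
      show "\<forall>b\<in>B2 k. (\<exists>y\<in>b. y < k+4) \<and> (\<exists>y\<in>b. k+4 \<le> y \<and> y < 2*(k+4))" using hit2 by blast
      show "k+4 = (v+2) div 3" by (rule v(2))
    qed
  qed
qed

end
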